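(* Let $(\mathcal M,g)$ be an $n$-dimensional Lorentzian manifold ($n\ge3$) with a concircularly semi-symmetric metric connection $\overset{1}{\nabla}$ whose associated vector field $P$ satisfies $g(P,P)=-1$. Then $(\mathcal M,g,\overset{1}{\nabla})$ is an Einstein type manifold of the fifth kind (i.e. $\overset{5}{Ric}=\frac{\overset{5}{r}}{n}g$) if and only if it is a perfect fluid space-time whose Ricci tensor is $\overset{g}{Ric}=\frac{n-1}{2}(3g+\pi\otimes\pi)$; in that case the scalar curvature is constant, $2\overset{g}{r}=(n-1)(3n-1)$.
   Context: Let $(\mathcal M,g)$ be an $n$-dimensional pseudo-Riemannian manifold with Levi-Civita connection $\overset{g}{\nabla}$, let $P$ be a vector field and $\pi=g(\cdot,P)$ its associated 1-form. The semi-symmetric metric connection generated by $\pi$ is $\overset{1}{\nabla}_XY=\overset{g}{\nabla}_XY+\pi(Y)X-g(X,Y)P$; it satisfies $\overset{1}{\nabla}g=0$ and has torsion $\overset{1}{T}(X,Y)=\pi(Y)X-\pi(X)Y$. It is called a concircularly semi-symmetric metric connection if there is a smooth function $\omega$ on $\mathcal M$ such that $(\overset{g}{\nabla}_X\pi)(Y)-\pi(X)\pi(Y)=\omega\, g(X,Y)$ for all vector fields $X,Y$. Curvature tensors: $\overset{1}{R}(X,Y)Z=\overset{1}{\nabla}_X\overset{1}{\nabla}_YZ-\overset{1}{\nabla}_Y\overset{1}{\nabla}_XZ-\overset{1}{\nabla}_{[X,Y]}Z$ and, with $\mathfrak S_{XYZ}$ the cyclic sum over $X,Y,Z$, $\overset{5}{R}(X,Y)Z=\overset{1}{R}(X,Y)Z-\tfrac12(\overset{1}{\nabla}_X\overset{1}{T})(Y,Z)+\tfrac12(\overset{1}{\nabla}_Y\overset{1}{T})(X,Z)-\tfrac12\mathfrak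 S_{XYZ}\overset{1}{T}(\overset{1}{T}(X,Y),Z)+\tfrac12\overset{1}{T}(\overset{1}{T}(Z,X),Y)$. The Ricci tensors are $\overset{\theta}{Ric}(Y,Z)=\mathrm{tr}(X\mapsto \overset{\theta}{R}(X,Y)Z)$, and $\overset{g}{Ric}$ is the Ricci tensor of $\overset{g}{\nabla}$ defined the same way; $\overset{\theta}{r}$ and $\overset{g}{r}$ are their $g$-traces. A Lorentzian manifold is a perfect fluid space-time if $\overset{g}{Ric}=ag+b\,\pi\otimes\pi$ for scalar functions $a,b$. *)

theory Defs
  imports "HOL-Analysis.Analysis"
begin

text \<open>Local-coordinate model: the manifold is an open coordinate domain U in R^n
  (n = CARD('n)), vector fields are maps U -> R^n (components in the coordinate
  frame), the metric is a matrix-valued function g.\<close>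

type_synonym 'n vf = "real^'n \<Rightarrow> real^'n"
type_synonym 'n metric = "real^'n \<Rightarrow> real^'n^'n"

definition pd :: "'n::finite \<Rightarrow> (real^'n \<Rightarrow> real) \<Rightarrow> real^'n \<Rightarrow> real" where
  "pd i f x = deriv (\<lambda>t. f (x + t *\<^sub>R axis i 1)) 0"

fun Ck :: "nat \<Rightarrow> (real^'n::finite) set \<Rightarrow> (real^'n \<Rightarrow> real) \<Rightarrow> bool" where
  "Ck 0 U f = continuous_on U f"
| "Ck (Suc k) U f = (f differentiable_on U \<and> (\<forall>i. Ck k U (pd i f)))"

definition smooth_fun :: "(real^'n::finite) set \<Rightarrow> (real^'n \<Rightarrow> real) \<Rightarrow> bool" where
  "smooth_fun U f = (\<forall>k. Ck k U f)"

definition smooth_vf :: "(real^'n::finite) set \<Rightarrow> 'n vf \<Rightarrow> bool" where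
  "smooth_vf U X = (\<forall>k. smooth_fun U (\<lambda>x. X x $ k))"

definition smooth_metric :: "(real^'n::finite) set \<Rightarrow> 'n metric \<Rightarrow> bool" where
  "smooth_metric U g = (\<forall>i j. smooth_fun U (\<lambda>x. g x $ i $ j))"

definition lorentzian_matrix :: "real^'n::finite^'n \<Rightarrow> bool" where
  "lorentzian_matrix G = (transpose G = G \<and>
     (\<exists>(A::real^'n^'n) i0. invertible A \<and>
        transpose A ** G ** A = (\<chi> i j. if i = j then (if i = i0 then -1 else 1) else 0)))"

definition coord :: "'n::finite \<Rightarrow> 'n vf" where
  "coord i = (\<lambda>x. axis i 1)"

definition gf :: "'n::finite metric \<Rightarrow> 'n vf \<Rightarrow> 'n vf \<Rightarrow> real^'n \<Rightarrow> real" where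
  "gf g X Y x = X x \<bullet> (g x *v Y x)"

definition ginv :: "'n::finite metric \<Rightarrow> real^'n \<Rightarrow> real^'n^'n" where
  "ginv g x = matrix_inv (g x)"

definition dfun :: "'n::finite vf \<Rightarrow> (real^'n \<Rightarrow> real) \<Rightarrow> real^'n \<Rightarrow> real" where
  "dfun X f x = (\<Sum>i\<in>UNIV. X x $ i * pd i f x)"

definition dvf :: "'n::finite vf \<Rightarrow> 'n vf \<Rightarrow> 'n vf" where
  "dvf X Y x = (\<chi> k. dfun X (\<lambda>y. Y y $ k) x)"

definition lie :: "'n::finite vf \<Rightarrow> 'n vf \<Rightarrow> 'n vf" where
  "lie X Y x = dvf X Y x - dvf Y X x"

definition chr :: "'n::finite metric \<Rightarrow> real^'n \<Rightarrow> 'n \<Rightarrow> 'n \<Rightarrow> 'n \<Rightarrow> real" where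
  "chr g x k i j = (1/2) * (\<Sum>l\<in>UNIV. ginv g x $ k $ l *
      (pd i (\<lambda>y. g y $ j $ l) x + pd j (\<lambda>y. g y $ i $ l) x - pd l (\<lambda>y. g y $ i $ j) x))"

definition nablaG :: "'n::finite metric \<Rightarrow> 'n vf \<Rightarrow> 'n vf \<Rightarrow> 'n vf" where
  "nablaG g X Y x = dvf X Y x + (\<chi> k. \<Sum>i\<in>UNIV. \<Sum>j\<in>UNIV. chr g x k i j * X x $ i * Y x $ j)"

definition curv :: "('n::finite vf \<Rightarrow> 'n vf \<Rightarrow> 'n vf) \<Rightarrow> 'n vf \<Rightarrow> 'n vf \<Rightarrow> 'n vf \<Rightarrow> 'n vf" where
  "curv D X Y Z x = D X (D Y Z) x - D Y (D X Z) x - D (lie X Y) Z x"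

definition ricci :: "('n::finite vf \<Rightarrow> 'n vf \<Rightarrow> 'n vf \<Rightarrow> 'n vf) \<Rightarrow> 'n vf \<Rightarrow> 'n vf \<Rightarrow> real^'n \<Rightarrow> real" where
  "ricci R Y Z x = (\<Sum>i\<in>UNIV. R (coord i) Y Z x $ i)"

definition scal :: "'n::finite metric \<Rightarrow> ('n vf \<Rightarrow> 'n vf \<Rightarrow> real^'n \<Rightarrow> real) \<Rightarrow> real^'n \<Rightarrow> real" where
  "scal g Ric x = (\<Sum>j\<in>UNIV. \<Sum>k\<in>UNIV. ginv g x $ j $ k * Ric (coord j) (coord k) x)"

definition pif :: "'n::finite metric \<Rightarrow> 'n vf \<Rightarrow> 'n vf \<Rightarrow> real^'n \<Rightarrow> real" where
  "pif g P X x = gf g X P x"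

definition nabla1 :: "'n::finite metric \<Rightarrow> 'n vf \<Rightarrow> 'n vf \<Rightarrow> 'n vf \<Rightarrow> 'n vf" where
  "nabla1 g P X Y x = nablaG g X Y x + pif g P Y x *\<^sub>R X x - gf g X Y x *\<^sub>R P x"

definition tors1 :: "'n::finite metric \<Rightarrow> 'n vf \<Rightarrow> 'n vf \<Rightarrow> 'n vf \<Rightarrow> 'n vf" where
  "tors1 g P X Y x = pif g P Y x *\<^sub>R X x - pif g P X x *\<^sub>R Y x"

definition nablaT1 :: "'n::finite metric \<Rightarrow> 'n vf \<Rightarrow> 'n vf \<Rightarrow> 'n vf \<Rightarrow> 'n vf \<Rightarrow> 'n vf" where
  "nablaT1 g P X Y Z x = nabla1 g P X (tors1 g P Y Z) x
     - tors1 g P (nabla1 g P X Y) Z x - tors1 g P Y (nabla1 g P X Z) x"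

definition R1 :: "'n::finite metric \<Rightarrow> 'n vf \<Rightarrow> 'n vf \<Rightarrow> 'n vf \<Rightarrow> 'n vf \<Rightarrow> 'n vf" where
  "R1 g P = curv (nabla1 g P)"

definition R5 :: "'n::finite metric \<Rightarrow> 'n vf \<Rightarrow> 'n vf \<Rightarrow> 'n vf \<Rightarrow> 'n vf \<Rightarrow> 'n vf" where
  "R5 g P X Y Z x = (let T = tors1 g P in
      R1 g P X Y Z x - (1/2) *\<^sub>R nablaT1 g P X Y Z x + (1/2) *\<^sub>R nablaT1 g P Y X Z x
      - (1/2) *\<^sub>R (T (T X Y) Z x + T (T Y Z) X x + T (T Z X) Y x)
      + (1/2) *\<^sub>R T (T Z X) Y x)"

definition RicG :: "'n::finite metric \<Rightarrow> 'n vf \<Rightarrow> 'n vf \<Rightarrow> real^'n \<Rightarrow> real" where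
  "RicG g = ricci (curv (nablaG g))"

definition Ric5 :: "'n::finite metric \<Rightarrow> 'n vf \<Rightarrow> 'n vf \<Rightarrow> 'n vf \<Rightarrow> real^'n \<Rightarrow> real" where
  "Ric5 g P = ricci (R5 g P)"

definition concircular :: "(real^'n::finite) set \<Rightarrow> 'n metric \<Rightarrow> 'n vf \<Rightarrow> bool" where
  "concircular U g P = (\<exists>\<omega>. smooth_fun U \<omega> \<and>
     (\<forall>X Y. smooth_vf U X \<longrightarrow> smooth_vf U Y \<longrightarrow> (\<forall>x\<in>U.
        dfun X (pif g P Y) x - pif g P (nablaG g X Y) x - pif g P X x * pif g P Y x
          = \<omega> x * gf g X Y x)))"

definition einstein5 :: "(real^'n::finite) set \<Rightarrow> 'n metric \<Rightarrow> 'n vf \<Rightarrow> bool" where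
  "einstein5 U g P = (\<forall>Y Z. smooth_vf U Y \<longrightarrow> smooth_vf U Z \<longrightarrow> (\<forall>x\<in>U.
      Ric5 g P Y Z x = scal g (Ric5 g P) x / real CARD('n) * gf g Y Z x))"

definition perfect_fluid :: "(real^'n::finite) set \<Rightarrow> 'n metric \<Rightarrow> 'n vf \<Rightarrow> bool" where
  "perfect_fluid U g P = (\<exists>a b. \<forall>Y Z. smooth_vf U Y \<longrightarrow> smooth_vf U Z \<longrightarrow> (\<forall>x\<in>U.
      RicG g Y Z x = a x * gf g Y Z x + b x * pif g P Y x * pif g P Z x))"

end

theory Submission
  imports Defs
begin

lemma pd_hasd:
  assumes "(f has_derivative f') (at x)"
  shows "pd i f x = f' (axis i 1)"
proof -
  have l: "linear f'" using assms has_derivative_linear by blast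
  have "((\<lambda>t::real. x + t *\<^sub>R axis i 1) has_derivative (\<lambda>t. t *\<^sub>R axis i 1)) (at 0)"
    by (auto intro!: derivative_eq_intros)
  moreover have "(f has_derivative f') (at (x + (0::real) *\<^sub>R axis i 1))" using assms by simp
  ultimately have "((\<lambda>t. f (x + t *\<^sub>R axis i 1)) has_derivative (\<lambda>t. f' (t *\<^sub>R axis i 1))) (at 0)"
    by (rule has_derivative_compose)
  moreover have "(\<lambda>t. f' (t *\<^sub>R axis i 1)) = (\<lambda>t. f' (axis i 1) * t)"
    by (simp add: linear_cmul[OF l] mult.commute)
  ultimately have "((\<lambda>t. f (x + t *\<^sub>R axis i 1)) has_real_derivative f' (axis i 1)) (at 0)"
    by (simp add: has_field_derivative_def)
  then show ?thesis unfolding pd_def by (rule DERIV_imp_deriv)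
qed

lemma dfun_hasd:
  assumes "(f has_derivative f') (at x)"
  shows "dfun X f x = f' (X x)"
proof -
  have l: "linear f'" using assms has_derivative_linear by blast
  have "dfun X f x = (\<Sum>i\<in>UNIV. X x $ i * f' (axis i 1))"
    unfolding dfun_def using pd_hasd[OF assms] by simp
  also have "\<dots> = f' (\<Sum>i\<in>UNIV. X x $ i *\<^sub>R axis i 1)"
    by (simp add: linear_sum[OF l] linear_cmul[OF l])
  also have "(\<Sum>i\<in>UNIV. X x $ i *\<^sub>R axis i 1) = X x"
    using basis_expansion[of "X x"] by (simp add: scalar_mult_eq_scaleR)
  finally show ?thesis .
qed

lemma dfun_diffd:
  assumes "f differentiable (at x)"
  shows "dfun X f x = frechet_derivative f (at x) (X x)"
  by (rule dfun_hasd) (use assms frechet_derivative_works in blast)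

lemma fd_works: "f differentiable (at x) \<Longrightarrow> (f has_derivative frechet_derivative f (at x)) (at x)"
  using frechet_derivative_works by blast

lemma dfun_add:
  assumes "f differentiable (at x)" "h differentiable (at x)"
  shows "dfun X (\<lambda>y. f y + h y) x = dfun X f x + dfun X h x"
  unfolding dfun_diffd[OF assms(1)] dfun_diffd[OF assms(2)]
  by (rule dfun_hasd[OF has_derivative_add[OF fd_works[OF assms(1)] fd_works[OF assms(2)]]])

lemma dfun_diff:
  assumes "f differentiable (at x)" "h differentiable (at x)"
  shows "dfun X (\<lambda>y. f y - h y) x = dfun X f x - dfun X h x"
  unfolding dfun_diffd[OF assms(1)] dfun_diffd[OF assms(2)]
  by (rule dfun_hasd[OF has_derivative_diff[OF fd_works[OF assms(1)] fd_works[OF assms(2)]]])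

lemma dfun_mult:
  fixes f h :: "real^'n::finite \<Rightarrow> real"
  assumes "f differentiable (at x)" "h differentiable (at x)"
  shows "dfun X (\<lambda>y. f y * h y) x = f x * dfun X h x + dfun X f x * h x"
  unfolding dfun_diffd[OF assms(1)] dfun_diffd[OF assms(2)]
  by (rule dfun_hasd[OF has_derivative_mult[OF fd_works[OF assms(1)] fd_works[OF assms(2)]]])

lemma dfun_const: "dfun X (\<lambda>y. c) x = 0"
  by (rule dfun_hasd[of "\<lambda>y. c" "\<lambda>_. 0", simplified])

lemma dfun_sum:
  assumes "finite S" "\<And>a. a \<in> S \<Longrightarrow> f a differentiable (at x)"
  shows "dfun X (\<lambda>y. \<Sum>a\<in>S. f a y) x = (\<Sum>a\<in>S. dfun X (f a) x)"
proof -
  have a: "\<And>a. a \<in> S \<Longrightarrow> (f a has_derivative frechet_derivative (f a) (at x)) (at x)"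
    using assms fd_works by blast
  have "((\<lambda>y. \<Sum>a\<in>S. f a y) has_derivative (\<lambda>v. \<Sum>a\<in>S. frechet_derivative (f a) (at x) v)) (at x)"
    by (rule has_derivative_sum) (use a in auto)
  then have "dfun X (\<lambda>y. \<Sum>a\<in>S. f a y) x = (\<Sum>a\<in>S. frechet_derivative (f a) (at x) (X x))"
    by (rule dfun_hasd)
  also have "\<dots> = (\<Sum>a\<in>S. dfun X (f a) x)"
    by (rule sum.cong[OF refl]) (rule dfun_diffd[symmetric], rule assms(2))
  finally show ?thesis .
qed

lemma dfun_local:
  assumes "open U" "x \<in> U" "\<And>y. y \<in> U \<Longrightarrow> f y = h y"
  shows "dfun X f x = dfun X h x"
proof -
  have "pd i f x = pd i h x" for i
  proof -
    have "eventually (\<lambda>t::real. x + t *\<^sub>R axis i 1 \<in> U) (nhds 0)"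
    proof -
      have "eventually (\<lambda>t. t \<in> (\<lambda>t::real. x + t *\<^sub>R axis i 1) -` U) (nhds 0)"
      proof (rule eventually_nhds_in_open)
        show "open ((\<lambda>t::real. x + t *\<^sub>R axis i 1) -` U)"
          by (rule continuous_open_vimage[OF assms(1)]) (intro continuous_intros)
      qed (simp add: assms)
      then show ?thesis by simp
    qed
    then have "eventually (\<lambda>t::real. f (x + t *\<^sub>R axis i 1) = h (x + t *\<^sub>R axis i 1)) (nhds 0)"
      by eventually_elim (use assms in auto)
    then show ?thesis unfolding pd_def by (rule deriv_cong_ev) simp
  qed
  then show ?thesis unfolding dfun_def by simp
qed

lemma pd_const: "pd i (\<lambda>y. c) = (\<lambda>y. 0)"
  unfolding pd_def by (auto simp: fun_eq_iff)

lemma Ck_const: "Ck k U (\<lambda>y. c)"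
  by (induction k arbitrary: c) (auto simp: pd_const)

lemma smooth_const: "smooth_fun U (\<lambda>y. c)"
  unfolding smooth_fun_def using Ck_const by blast

lemma smooth_coord: "smooth_vf U (coord i)"
  unfolding smooth_vf_def coord_def using smooth_const by blast

lemma smooth_pd: "smooth_fun U f \<Longrightarrow> smooth_fun U (pd i f)"
  unfolding smooth_fun_def by (metis Ck.simps(2))

lemma smooth_diff:
  assumes "smooth_fun U f" "open U" "x \<in> U"
  shows "f differentiable (at x)"
proof -
  have "Ck (Suc 0) U f" using assms unfolding smooth_fun_def by blast
  then have "f differentiable_on U" by simp
  then show ?thesis using assms differentiable_on_eq_differentiable_at by blast
qed

lemma differentiable_prod':
  fixes f :: "'i \<Rightarrow> 'a::real_normed_vector \<Rightarrow> real"
  assumes "\<And>i. i \<in> I \<Longrightarrow> f i differentiable (at x)"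
  shows "(\<lambda>y. \<Prod>i\<in>I. f i y) differentiable (at x)"
proof -
  have "\<And>i. i \<in> I \<Longrightarrow> (f i has_derivative frechet_derivative (f i) (at x)) (at x)"
    using assms fd_works by blast
  then have "((\<lambda>y. \<Prod>i\<in>I. f i y) has_derivative (\<lambda>y. \<Sum>i\<in>I. frechet_derivative (f i) (at x) y * (\<Prod>j\<in>I - {i}. f j x))) (at x)"
    by (rule has_derivative_prod)
  then show ?thesis unfolding differentiable_def by blast
qed

lemma differentiable_det:
  fixes M :: "real^'m \<Rightarrow> real^'n::finite^'n"
  assumes "\<And>a b. (\<lambda>y. M y $ a $ b) differentiable (at x)"
  shows "(\<lambda>y. det (M y)) differentiable (at x)"
  unfolding det_def
proof (rule differentiable_sum)
  show "finite {p. p permutes (UNIV::'n set)}" by (simp add: finite_permutations)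
qed (intro ballI differentiable_mult differentiable_const differentiable_prod' assms)

lemma matrix_inv_works:
  fixes A :: "real^'n::finite^'n"
  assumes "invertible A"
  shows "A ** matrix_inv A = mat 1" "matrix_inv A ** A = mat 1"
proof -
  have "\<exists>A'. A ** A' = mat 1 \<and> A' ** A = mat 1" using assms unfolding invertible_def by blast
  then have "A ** matrix_inv A = mat 1 \<and> matrix_inv A ** A = mat 1"
    unfolding matrix_inv_def by (rule someI_ex)
  then show "A ** matrix_inv A = mat 1" "matrix_inv A ** A = mat 1" by auto
qed

lemma sum_delta_mult: fixes f :: "'n::finite \<Rightarrow> real" shows "(\<Sum>j\<in>UNIV. f j * (if j = k then 1 else 0)) = (f k :: real)"
proof -
  have "(\<Sum>j\<in>UNIV. f j * (if j = k then 1 else 0)) = (\<Sum>j\<in>UNIV. if j = k then f j else 0)" by (rule sum.cong) auto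
  then show ?thesis by simp
qed

lemma sum_delta_mult': fixes f :: "'n::finite \<Rightarrow> real" shows "(\<Sum>j\<in>UNIV. (if j = k then 1 else 0) * f j) = (f k :: real)"
proof -
  have "(\<Sum>j\<in>UNIV. (if j = k then 1 else 0) * f j) = (\<Sum>j\<in>UNIV. if j = k then f j else 0)" by (rule sum.cong) auto
  then show ?thesis by simp
qed

lemma matrix_inv_cramer:
  fixes A :: "real^'n::finite^'n"
  assumes "invertible A"
  shows "matrix_inv A $ j $ k = det (\<chi> a b. if b = j then axis k 1 $ a else A $ a $ b) / det A"
proof -
  let ?x = "matrix_inv A *v axis k 1"
  have "A *v ?x = axis k 1"
    by (simp add: matrix_vector_mul_assoc matrix_inv_works[OF assms])
  moreover have "det A \<noteq> 0" using assms invertible_det_nz by blast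
  ultimately have "?x = (\<chi> j. det (\<chi> a b. if b = j then axis k 1 $ a else A $ a $ b) / det A)"
    by (subst (asm) cramer) 
  then have "?x $ j = det (\<chi> a b. if b = j then axis k 1 $ a else A $ a $ b) / det A" by simp
  moreover have "?x $ j = matrix_inv A $ j $ k"
    by (simp add: matrix_vector_mult_def axis_def sum_delta_mult)
  ultimately show ?thesis by simp
qed

definition gg :: "real^'n::finite^'n \<Rightarrow> real^'n \<Rightarrow> real^'n \<Rightarrow> real" where
  "gg G v w = v \<bullet> (G *v w)"

lemma gg_add1[simp]: "gg G (a + b) w = gg G a w + gg G b w" by (simp add: gg_def inner_add_left)
lemma gg_add2[simp]: "gg G v (a + b) = gg G v a + gg G v b"
  by (simp add: gg_def inner_add_right matrix_vector_right_distrib)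
lemma gg_diff1[simp]: "gg G (a - b) w = gg G a w - gg G b w" by (simp add: gg_def inner_diff_left)
lemma gg_diff2[simp]: "gg G v (a - b) = gg G v a - gg G v b"
  by (simp add: gg_def inner_diff_right matrix_vector_mult_diff_distrib)
lemma gg_scale1[simp]: "gg G (c *\<^sub>R a) w = c * gg G a w" by (simp add: gg_def)
lemma gg_scale2[simp]: "gg G v (c *\<^sub>R a) = c * gg G v a"
  by (simp add: gg_def matrix_vector_mult_scaleR)
lemma gg_minus1[simp]: "gg G (- a) w = - gg G a w" by (simp add: gg_def)
lemma gg_zero[simp]: "gg G 0 w = 0" "gg G v 0 = 0" by (simp_all add: gg_def)
lemma gg_minus2[simp]: "gg G v (- a) = - gg G v a"
  using gg_diff2[of G v 0 a] by simp

lemma gg_sum: "gg G v w = (\<Sum>a\<in>UNIV. \<Sum>b\<in>UNIV. v $ a * G $ a $ b * w $ b)"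
  by (simp add: gg_def inner_vec_def matrix_vector_mult_def sum_distrib_left mult.assoc)

lemma gg_sym:
  assumes "\<And>a b. G $ a $ b = G $ b $ a"
  shows "gg G v w = gg G w v"
  unfolding gg_sum by (subst sum.swap) (simp add: assms mult.commute mult.left_commute)

lemma gg_axis1: "gg G (axis j 1) w = (G *v w) $ j"
  by (simp add: gg_def inner_axis')

lemma gf_gg: "gf g X Y x = gg (g x) (X x) (Y x)" by (simp add: gf_def gg_def)
lemma pif_gg: "pif g P Y x = gg (g x) (Y x) (P x)" by (simp add: pif_def gf_def gg_def)

lemma dfun_coord: "dfun (coord i) f x = pd i f x"
  by (simp add: dfun_def coord_def axis_def sum_delta_mult')

lemma pd_local:
  assumes "open U" "x \<in> U" "\<And>y. y \<in> U \<Longrightarrow> f y = h y"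
  shows "pd i f x = pd i h x"
  using dfun_local[of U x f h "coord i"] assms by (simp add: dfun_coord)

definition DV :: "real^'n::finite \<Rightarrow> 'n vf \<Rightarrow> bool" where
  "DV x W = (\<forall>k. (\<lambda>y. W y $ k) differentiable (at x))"

lemma smooth_DV: "smooth_vf U W \<Longrightarrow> open U \<Longrightarrow> x \<in> U \<Longrightarrow> DV x W"
  unfolding DV_def smooth_vf_def using smooth_diff by blast

lemma smooth_dpd: "smooth_vf U W \<Longrightarrow> open U \<Longrightarrow> x \<in> U \<Longrightarrow> (\<lambda>y. pd i (\<lambda>y. W y $ k) y) differentiable (at x)"
  unfolding smooth_vf_def using smooth_diff smooth_pd by (metis (no_types, lifting) ext)

locale LS =
  fixes U :: "(real^'n::finite) set" and g :: "'n metric" and P :: "'n vf"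
  assumes opn: "open U" and smg: "smooth_metric U g" and lor: "\<forall>x\<in>U. lorentzian_matrix (g x)"
    and sP: "smooth_vf U P" and conc: "concircular U g P" and unitP: "\<forall>x\<in>U. gf g P P x = -1"
begin

lemma gsym: assumes "x \<in> U" shows "g x $ a $ b = g x $ b $ a"
proof -
  have "transpose (g x) = g x" using lor assms unfolding lorentzian_matrix_def by blast
  then have "transpose (g x) $ a $ b = g x $ a $ b" by simp
  then show ?thesis by (simp add: transpose_def)
qed

lemma ginv_ok: assumes "x \<in> U" shows "invertible (g x)"
proof -
  obtain A :: "real^'n^'n" and i0 where A: "invertible A"
    "transpose A ** g x ** A = (\<chi> i j. if i = j then (if i = i0 then -1 else 1) else 0)"
    using lor assms unfolding lorentzian_matrix_def by blast
  let ?D = "(\<chi> i j. if i = j then (if i = i0 then -1 else 1) else 0) :: real^'n^'n"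
  have "det ?D = (\<Prod>i\<in>UNIV. ?D $ i $ i)" by (rule det_diagonal) simp
  also have "\<dots> \<noteq> 0" by (simp add: prod_zero_iff)
  finally have "det (transpose A ** g x ** A) \<noteq> 0" using A by simp
  then have "det (g x) \<noteq> 0" by (simp add: det_mul)
  then show ?thesis using invertible_det_nz by blast
qed

lemma gginv: assumes "x \<in> U" shows "g x ** ginv g x = mat 1" "ginv g x ** g x = mat 1"
  using matrix_inv_works[OF ginv_ok[OF assms]] by (simp_all add: ginv_def)

lemma dg: "x \<in> U \<Longrightarrow> (\<lambda>y. g y $ a $ b) differentiable (at x)"
  using smg opn smooth_diff unfolding smooth_metric_def by blast

lemma dpg: "x \<in> U \<Longrightarrow> (\<lambda>y. pd k (\<lambda>y. g y $ a $ b) y) differentiable (at x)"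
  using smg opn smooth_diff smooth_pd unfolding smooth_metric_def by (metis (no_types, lifting) ext)

lemma dginv: assumes "x \<in> U" shows "(\<lambda>y. ginv g y $ a $ b) differentiable (at x)"
proof -
  let ?h = "\<lambda>y. det (\<chi> c d. if d = a then axis b 1 $ c else g y $ c $ d) / det (g y)"
  have d1: "(\<lambda>y. det (\<chi> c d. if d = a then axis b 1 $ c else g y $ c $ d)) differentiable (at x)"
  proof (rule differentiable_det)
    fix c d show "(\<lambda>y. (\<chi> c d. if d = a then axis b 1 $ c else g y $ c $ d) $ c $ d) differentiable (at x)"
      using dg[OF assms] by (cases "d = a") simp_all
  qed
  have d2: "(\<lambda>y. det (g y)) differentiable (at x)"
    by (rule differentiable_det) (rule dg[OF assms])
  have "det (g x) \<noteq> 0" using ginv_ok[OF assms] invertible_det_nz by blast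
  then have "?h differentiable (at x)" using d1 d2 by (rule_tac differentiable_divide) auto
  then obtain D where D: "(?h has_derivative D) (at x)" unfolding differentiable_def by blast
  have eq: "\<And>y. y \<in> U \<Longrightarrow> ?h y = ginv g y $ a $ b"
    using matrix_inv_cramer[OF ginv_ok] by (simp add: ginv_def)
  have "((\<lambda>y. ginv g y $ a $ b) has_derivative D) (at x)"
    by (rule has_derivative_transform_within_open[OF D opn assms]) (rule eq)
  then show ?thesis unfolding differentiable_def by blast
qed

lemma dchr: assumes "x \<in> U" shows "(\<lambda>y. chr g y k i j) differentiable (at x)"
  unfolding chr_def
  by (intro differentiable_mult differentiable_const differentiable_sum ballI finite_UNIV
        differentiable_add differentiable_diff dginv[OF assms] dpg[OF assms]) auto

lemma d_gf: assumes "x \<in> U" "DV x A" "DV x B" shows "(\<lambda>y. gf g A B y) differentiable (at x)"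
proof -
  have "(\<lambda>y. gf g A B y) = (\<lambda>y. \<Sum>a\<in>UNIV. \<Sum>b\<in>UNIV. A y $ a * g y $ a $ b * B y $ b)"
    by (simp add: gf_gg gg_sum)
  moreover have "(\<lambda>y. \<Sum>a\<in>UNIV. \<Sum>b\<in>UNIV. A y $ a * g y $ a $ b * B y $ b) differentiable (at x)"
    using assms(2,3) unfolding DV_def
    by (intro differentiable_mult differentiable_sum ballI finite_UNIV dg[OF assms(1)]) auto
  ultimately show ?thesis by simp
qed

lemma DV_N: assumes "x \<in> U" "smooth_vf U A" "smooth_vf U B" shows "DV x (nablaG g A B)"
proof -
  have a: "\<And>k. (\<lambda>y. A y $ k) differentiable (at x)" "\<And>k. (\<lambda>y. B y $ k) differentiable (at x)"
    using smooth_DV[OF assms(2) opn assms(1)] smooth_DV[OF assms(3) opn assms(1)] unfolding DV_def by auto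
  have b: "\<And>i k. (\<lambda>y. pd i (\<lambda>y. B y $ k) y) differentiable (at x)"
    using smooth_dpd[OF assms(3) opn assms(1)] by blast
  show ?thesis unfolding DV_def
  proof
    fix k
    have 1: "(\<lambda>y. \<Sum>i\<in>UNIV. A y $ i * pd i (\<lambda>y. B y $ k) y) differentiable (at x)"
      by (rule differentiable_sum) (auto intro!: differentiable_mult a b)
    have 2: "(\<lambda>y. \<Sum>i\<in>UNIV. \<Sum>j\<in>UNIV. chr g y k i j * A y $ i * B y $ j) differentiable (at x)"
      by (rule differentiable_sum) (auto intro!: differentiable_sum differentiable_mult a dchr[OF assms(1)])
    have "(\<lambda>y. nablaG g A B y $ k) = (\<lambda>y. (\<Sum>i\<in>UNIV. A y $ i * pd i (\<lambda>y. B y $ k) y) + (\<Sum>i\<in>UNIV. \<Sum>j\<in>UNIV. chr g y k i j * A y $ i * B y $ j))"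
      by (simp add: nablaG_def dvf_def dfun_def)
    then show "(\<lambda>y. nablaG g A B y $ k) differentiable (at x)"
      using differentiable_add[OF 1 2] by simp
  qed
qed

lemma DV_add: "DV x A \<Longrightarrow> DV x B \<Longrightarrow> DV x (\<lambda>y. A y + B y)"
  unfolding DV_def by simp
lemma DV_diff: "DV x A \<Longrightarrow> DV x B \<Longrightarrow> DV x (\<lambda>y. A y - B y)"
  unfolding DV_def by simp
lemma DV_scale: "f differentiable (at x) \<Longrightarrow> DV x B \<Longrightarrow> DV x (\<lambda>y. f y *\<^sub>R B y)"
  unfolding DV_def by simp

end

definition Gam :: "'n::finite metric \<Rightarrow> real^'n \<Rightarrow> real^'n \<Rightarrow> real^'n \<Rightarrow> real^'n" where
  "Gam g x v w = (\<chi> k. \<Sum>i\<in>UNIV. \<Sum>j\<in>UNIV. chr g x k i j * v $ i * w $ j)"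

lemma nablaG_Gam: "nablaG g X Y x = dvf X Y x + Gam g x (X x) (Y x)"
  by (simp add: nablaG_def Gam_def)

lemma Gam_add2: "Gam g x v (a + b) = Gam g x v a + Gam g x v b"
  by (simp add: Gam_def vec_eq_iff algebra_simps sum.distrib)
lemma Gam_diff2: "Gam g x v (a - b) = Gam g x v a - Gam g x v b"
  by (simp add: Gam_def vec_eq_iff algebra_simps sum_subtractf)
lemma Gam_scale2: "Gam g x v (c *\<^sub>R a) = c *\<^sub>R Gam g x v a"
  by (simp add: Gam_def vec_eq_iff algebra_simps sum_distrib_left)

lemma dvf_add: "DV x W1 \<Longrightarrow> DV x W2 \<Longrightarrow> dvf X (\<lambda>y. W1 y + W2 y) x = dvf X W1 x + dvf X W2 x"
  unfolding DV_def by (simp add: dvf_def vec_eq_iff dfun_add)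
lemma dvf_diff: "DV x W1 \<Longrightarrow> DV x W2 \<Longrightarrow> dvf X (\<lambda>y. W1 y - W2 y) x = dvf X W1 x - dvf X W2 x"
  unfolding DV_def by (simp add: dvf_def vec_eq_iff dfun_diff)
lemma dvf_scale: "f differentiable (at x) \<Longrightarrow> DV x W \<Longrightarrow>
   dvf X (\<lambda>y. f y *\<^sub>R W y) x = dfun X f x *\<^sub>R W x + f x *\<^sub>R dvf X W x"
  unfolding DV_def by (simp add: dvf_def vec_eq_iff dfun_mult)

lemma N_add: "DV x W1 \<Longrightarrow> DV x W2 \<Longrightarrow> nablaG g X (\<lambda>y. W1 y + W2 y) x = nablaG g X W1 x + nablaG g X W2 x"
  by (simp add: nablaG_Gam dvf_add Gam_add2)
lemma N_diff: "DV x W1 \<Longrightarrow> DV x W2 \<Longrightarrow> nablaG g X (\<lambda>y. W1 y - W2 y) x = nablaG g X W1 x - nablaG g X W2 x"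
  by (simp add: nablaG_Gam dvf_diff Gam_diff2)
lemma N_scale: "f differentiable (at x) \<Longrightarrow> DV x W \<Longrightarrow>
   nablaG g X (\<lambda>y. f y *\<^sub>R W y) x = dfun X f x *\<^sub>R W x + f x *\<^sub>R nablaG g X W x"
  by (simp add: nablaG_Gam dvf_scale Gam_scale2 algebra_simps)

lemma N_local: assumes "open U" "x \<in> U" "\<And>y. y \<in> U \<Longrightarrow> W1 y = W2 y"
  shows "nablaG g X W1 x = nablaG g X W2 x"
proof -
  have e: "W1 x = W2 x" using assms by blast
  have "dfun X (\<lambda>y. W1 y $ k) x = dfun X (\<lambda>y. W2 y $ k) x" for k
    by (rule dfun_local[OF assms(1,2)]) (simp add: assms(3))
  then have "dvf X W1 x = dvf X W2 x" unfolding dvf_def by (simp add: vec_eq_iff)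
  then show ?thesis by (simp add: nablaG_Gam e)
qed

lemma axis_sum: "(\<Sum>a\<in>UNIV. f a * (axis i 1 :: real^'n::finite) $ a) = f i"
  by (simp add: axis_def sum_delta_mult)

lemma N_first: "nablaG g W Y x = (\<Sum>i\<in>UNIV. W x $ i *\<^sub>R nablaG g (coord i) Y x)"
proof -
  have "nablaG g W Y x $ k = (\<Sum>i\<in>UNIV. W x $ i *\<^sub>R nablaG g (coord i) Y x) $ k" for k
  proof -
    have "(\<Sum>i\<in>UNIV. W x $ i *\<^sub>R nablaG g (coord i) Y x) $ k =
       (\<Sum>i\<in>UNIV. W x $ i * (pd i (\<lambda>y. Y y $ k) x + (\<Sum>b\<in>UNIV. chr g x k i b * Y x $ b)))"
    proof -
      have "\<And>i. (\<Sum>a\<in>UNIV. \<Sum>b\<in>UNIV. chr g x k a b * axis i 1 $ a * Y x $ b) = (\<Sum>b\<in>UNIV. chr g x k i b * Y x $ b)"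
        apply (subst sum.swap)
        apply (rule sum.cong[OF refl])
        using axis_sum[of "\<lambda>a. chr g x k a _ * Y x $ _"] by (simp add: algebra_simps)
      then show ?thesis
        by (simp add: nablaG_def dvf_def dfun_coord[symmetric] coord_def)
    qed
    also have "\<dots> = nablaG g W Y x $ k"
      by (simp add: nablaG_def dvf_def dfun_def algebra_simps sum.distrib sum_distrib_left)
    finally show ?thesis by simp
  qed
  then show ?thesis by (simp add: vec_eq_iff)
qed

lemma sum3_key:
  fixes Y Z X :: "'n::finite \<Rightarrow> real" and C :: "'n \<Rightarrow> 'n \<Rightarrow> 'n \<Rightarrow> real" and D
  assumes "\<And>a b i. C b i a + C a i b = D a b i"
  shows "(\<Sum>a\<in>UNIV. \<Sum>b\<in>UNIV. Y a * (\<Sum>i\<in>UNIV. X i * D a b i) * Z b) =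
    (\<Sum>b\<in>UNIV. Z b * (\<Sum>i\<in>UNIV. \<Sum>j\<in>UNIV. X i * Y j * C b i j)) +
    (\<Sum>a\<in>UNIV. Y a * (\<Sum>i\<in>UNIV. \<Sum>j\<in>UNIV. X i * Z j * C a i j))"
proof -
  have r1: "(\<Sum>b\<in>UNIV. Z b * (\<Sum>i\<in>UNIV. \<Sum>j\<in>UNIV. X i * Y j * C b i j)) =
     (\<Sum>a\<in>UNIV. \<Sum>b\<in>UNIV. \<Sum>i\<in>UNIV. Y a * X i * Z b * C b i a)"
  proof -
    have "(\<Sum>b\<in>UNIV. Z b * (\<Sum>i\<in>UNIV. \<Sum>j\<in>UNIV. X i * Y j * C b i j)) =
      (\<Sum>b\<in>UNIV. \<Sum>i\<in>UNIV. \<Sum>j\<in>UNIV. Y j * X i * Z b * C b i j)"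
      by (simp add: sum_distrib_left mult_ac)
    also have "\<dots> = (\<Sum>b\<in>UNIV. \<Sum>j\<in>UNIV. \<Sum>i\<in>UNIV. Y j * X i * Z b * C b i j)"
      by (rule sum.cong[OF refl]) (rule sum.swap)
    also have "\<dots> = (\<Sum>j\<in>UNIV. \<Sum>b\<in>UNIV. \<Sum>i\<in>UNIV. Y j * X i * Z b * C b i j)"
      by (rule sum.swap)
    finally show ?thesis .
  qed
  have r2: "(\<Sum>a\<in>UNIV. Y a * (\<Sum>i\<in>UNIV. \<Sum>j\<in>UNIV. X i * Z j * C a i j)) =
     (\<Sum>a\<in>UNIV. \<Sum>b\<in>UNIV. \<Sum>i\<in>UNIV. Y a * X i * Z b * C a i b)"
  proof -
    have "(\<Sum>a\<in>UNIV. Y a * (\<Sum>i\<in>UNIV. \<Sum>j\<in>UNIV. X i * Z j * C a i j)) =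
      (\<Sum>a\<in>UNIV. \<Sum>i\<in>UNIV. \<Sum>j\<in>UNIV. Y a * X i * Z j * C a i j)"
      by (simp add: sum_distrib_left mult_ac)
    also have "\<dots> = (\<Sum>a\<in>UNIV. \<Sum>j\<in>UNIV. \<Sum>i\<in>UNIV. Y a * X i * Z j * C a i j)"
      by (rule sum.cong[OF refl]) (rule sum.swap)
    finally show ?thesis .
  qed
  have "(\<Sum>a\<in>UNIV. \<Sum>b\<in>UNIV. Y a * (\<Sum>i\<in>UNIV. X i * D a b i) * Z b) =
     (\<Sum>a\<in>UNIV. \<Sum>b\<in>UNIV. \<Sum>i\<in>UNIV. Y a * X i * Z b * C b i a + Y a * X i * Z b * C a i b)"
    by (simp add: sum_distrib_left sum_distrib_right mult_ac flip: assms) (simp add: algebra_simps)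
  also have "\<dots> = (\<Sum>a\<in>UNIV. \<Sum>b\<in>UNIV. \<Sum>i\<in>UNIV. Y a * X i * Z b * C b i a) +
       (\<Sum>a\<in>UNIV. \<Sum>b\<in>UNIV. \<Sum>i\<in>UNIV. Y a * X i * Z b * C a i b)"
    by (simp add: sum.distrib)
  finally show ?thesis using r1 r2 by simp
qed

lemma sum_delta_mult2: fixes f :: "'n::finite \<Rightarrow> real" shows "(\<Sum>j\<in>UNIV. (if k = j then 1 else 0) * f j) = f k"
proof -
  have "(\<Sum>j\<in>UNIV. (if k = j then 1 else 0) * f j) = (\<Sum>j\<in>UNIV. if j = k then f j else 0)" by (rule sum.cong) auto
  then show ?thesis by simp
qed

definition Cl :: "'n::finite metric \<Rightarrow> real^'n \<Rightarrow> 'n \<Rightarrow> 'n \<Rightarrow> 'n \<Rightarrow> real" where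
  "Cl g x b i j = 1/2 * (pd i (\<lambda>y. g y $ j $ b) x + pd j (\<lambda>y. g y $ i $ b) x - pd b (\<lambda>y. g y $ i $ j) x)"

context LS begin

lemma pdg_sym: "x \<in> U \<Longrightarrow> pd l (\<lambda>y. g y $ i $ j) x = pd l (\<lambda>y. g y $ j $ i) x"
  by (rule pd_local[OF opn]) (auto simp: gsym)

lemma chr_sym: "x \<in> U \<Longrightarrow> chr g x k i j = chr g x k j i"
  unfolding chr_def by (intro arg_cong[where f="\<lambda>t. 1/2 * t"] sum.cong refl) (simp add: pdg_sym[of x _ i j])

lemma Gam_sym: "x \<in> U \<Longrightarrow> Gam g x v w = Gam g x w v"
  unfolding Gam_def vec_eq_iff
  by (auto, subst sum.swap) (simp add: chr_sym[of x _ _] mult_ac)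

lemma N_tf: "x \<in> U \<Longrightarrow> nablaG g X Y x - nablaG g Y X x = lie X Y x"
  by (simp add: nablaG_Gam lie_def Gam_sym[of x "X x"])

lemma lower: assumes "x \<in> U" shows "(\<Sum>a\<in>UNIV. g x $ b $ a * chr g x a i j) = Cl g x b i j"
proof -
  let ?F = "\<lambda>l. pd i (\<lambda>y. g y $ j $ l) x + pd j (\<lambda>y. g y $ i $ l) x - pd l (\<lambda>y. g y $ i $ j) x"
  have "(\<Sum>a\<in>UNIV. g x $ b $ a * chr g x a i j) = 1/2 * (\<Sum>a\<in>UNIV. \<Sum>l\<in>UNIV. g x $ b $ a * ginv g x $ a $ l * ?F l)"
    unfolding chr_def by (simp add: sum_distrib_left mult_ac)
  also have "\<dots> = 1/2 * (\<Sum>l\<in>UNIV. \<Sum>a\<in>UNIV. g x $ b $ a * ginv g x $ a $ l * ?F l)"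
    by (subst sum.swap) simp
  also have "\<dots> = 1/2 * (\<Sum>l\<in>UNIV. (g x ** ginv g x) $ b $ l * ?F l)"
    by (simp add: matrix_matrix_mult_def sum_distrib_right)
  also have "\<dots> = 1/2 * ?F b"
    by (simp add: gginv[OF assms] mat_def sum_delta_mult2)
  finally show ?thesis by (simp add: Cl_def)
qed

lemma GamL1: assumes "x \<in> U"
  shows "(\<Sum>a\<in>UNIV. Gam g x v w $ a * g x $ a $ b) = (\<Sum>i\<in>UNIV. \<Sum>j\<in>UNIV. v $ i * w $ j * Cl g x b i j)"
proof -
  have "(\<Sum>a\<in>UNIV. Gam g x v w $ a * g x $ a $ b) = (\<Sum>a\<in>UNIV. \<Sum>i\<in>UNIV. \<Sum>j\<in>UNIV. v $ i * w $ j * (g x $ b $ a * chr g x a i j))"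
    by (simp add: Gam_def sum_distrib_right sum_distrib_left gsym[OF assms, of _ b] mult_ac)
  also have "\<dots> = (\<Sum>i\<in>UNIV. \<Sum>a\<in>UNIV. \<Sum>j\<in>UNIV. v $ i * w $ j * (g x $ b $ a * chr g x a i j))"
    by (rule sum.swap)
  also have "\<dots> = (\<Sum>i\<in>UNIV. \<Sum>j\<in>UNIV. \<Sum>a\<in>UNIV. v $ i * w $ j * (g x $ b $ a * chr g x a i j))"
    by (rule sum.cong[OF refl]) (rule sum.swap)
  also have "\<dots> = (\<Sum>i\<in>UNIV. \<Sum>j\<in>UNIV. v $ i * w $ j * Cl g x b i j)"
    by (simp add: sum_distrib_left[symmetric] lower[OF assms])
  finally show ?thesis .
qed

lemma GamL2: assumes "x \<in> U"
  shows "(\<Sum>b\<in>UNIV. g x $ a $ b * Gam g x v w $ b) = (\<Sum>i\<in>UNIV. \<Sum>j\<in>UNIV. v $ i * w $ j * Cl g x a i j)"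
  using GamL1[OF assms, of v w a] by (simp add: gsym[OF assms, of a] mult.commute)

end

context LS begin

lemma N_metric:
  assumes x: "x \<in> U" and dY: "DV x Y" and dZ: "DV x Z"
  shows "dfun X (gf g Y Z) x = gf g (nablaG g X Y) Z x + gf g Y (nablaG g X Z) x"
proof -
  let ?dY = "\<lambda>a. dfun X (\<lambda>y. Y y $ a) x"
  let ?dZ = "\<lambda>a. dfun X (\<lambda>y. Z y $ a) x"
  let ?dG = "\<lambda>a b. dfun X (\<lambda>y. g y $ a $ b) x"
  have dy: "\<And>a. (\<lambda>y. Y y $ a) differentiable (at x)" using dY unfolding DV_def by blast
  have dz: "\<And>a. (\<lambda>y. Z y $ a) differentiable (at x)" using dZ unfolding DV_def by blast
  have dyg: "\<And>a b. (\<lambda>y. Y y $ a * g y $ a $ b) differentiable (at x)"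
    by (intro differentiable_mult dy dg[OF x])
  have gfe: "gf g Y Z = (\<lambda>y. \<Sum>a\<in>UNIV. \<Sum>b\<in>UNIV. Y y $ a * g y $ a $ b * Z y $ b)"
    by (simp add: fun_eq_iff gf_gg gg_sum)
  have e1: "dfun X (gf g Y Z) x = (\<Sum>a\<in>UNIV. \<Sum>b\<in>UNIV.
      ?dY a * g x $ a $ b * Z x $ b + Y x $ a * ?dG a b * Z x $ b + Y x $ a * g x $ a $ b * ?dZ b)"
  proof -
    have "dfun X (gf g Y Z) x = (\<Sum>a\<in>UNIV. dfun X (\<lambda>y. \<Sum>b\<in>UNIV. Y y $ a * g y $ a $ b * Z y $ b) x)"
      unfolding gfe
      by (rule dfun_sum) (auto intro!: differentiable_sum differentiable_mult dy dz dg[OF x])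
    also have "\<dots> = (\<Sum>a\<in>UNIV. \<Sum>b\<in>UNIV. dfun X (\<lambda>y. Y y $ a * g y $ a $ b * Z y $ b) x)"
      by (rule sum.cong[OF refl], rule dfun_sum) (auto intro!: differentiable_mult dy dz dg[OF x])
    also have "\<dots> = (\<Sum>a\<in>UNIV. \<Sum>b\<in>UNIV.
      ?dY a * g x $ a $ b * Z x $ b + Y x $ a * ?dG a b * Z x $ b + Y x $ a * g x $ a $ b * ?dZ b)"
    proof (intro sum.cong refl)
      fix a b
      show "dfun X (\<lambda>y. Y y $ a * g y $ a $ b * Z y $ b) x =
        ?dY a * g x $ a $ b * Z x $ b + Y x $ a * ?dG a b * Z x $ b + Y x $ a * g x $ a $ b * ?dZ b"
        unfolding dfun_mult[OF dyg dz] dfun_mult[OF dy dg[OF x]] by (simp add: algebra_simps)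
    qed
    finally show ?thesis .
  qed
  have dG: "\<And>a b. ?dG a b = (\<Sum>i\<in>UNIV. X x $ i * pd i (\<lambda>y. g y $ a $ b) x)"
    by (simp add: dfun_def)
  have e2: "gf g (nablaG g X Y) Z x = (\<Sum>a\<in>UNIV. \<Sum>b\<in>UNIV. ?dY a * g x $ a $ b * Z x $ b)
      + (\<Sum>b\<in>UNIV. Z x $ b * (\<Sum>i\<in>UNIV. \<Sum>j\<in>UNIV. X x $ i * Y x $ j * Cl g x b i j))"
  proof -
    have "gf g (nablaG g X Y) Z x = (\<Sum>a\<in>UNIV. \<Sum>b\<in>UNIV. ?dY a * g x $ a $ b * Z x $ b)
      + (\<Sum>a\<in>UNIV. \<Sum>b\<in>UNIV. Gam g x (X x) (Y x) $ a * g x $ a $ b * Z x $ b)"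
      by (simp add: gf_gg gg_sum nablaG_Gam dvf_def algebra_simps sum.distrib)
    also have "(\<Sum>a\<in>UNIV. \<Sum>b\<in>UNIV. Gam g x (X x) (Y x) $ a * g x $ a $ b * Z x $ b)
       = (\<Sum>b\<in>UNIV. Z x $ b * (\<Sum>a\<in>UNIV. Gam g x (X x) (Y x) $ a * g x $ a $ b))"
      by (subst sum.swap) (simp add: sum_distrib_left mult_ac)
    finally show ?thesis by (simp add: GamL1[OF x])
  qed
  have e3: "gf g Y (nablaG g X Z) x = (\<Sum>a\<in>UNIV. \<Sum>b\<in>UNIV. Y x $ a * g x $ a $ b * ?dZ b)
      + (\<Sum>a\<in>UNIV. Y x $ a * (\<Sum>i\<in>UNIV. \<Sum>j\<in>UNIV. X x $ i * Z x $ j * Cl g x a i j))"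
  proof -
    have "gf g Y (nablaG g X Z) x = (\<Sum>a\<in>UNIV. \<Sum>b\<in>UNIV. Y x $ a * g x $ a $ b * ?dZ b)
      + (\<Sum>a\<in>UNIV. \<Sum>b\<in>UNIV. Y x $ a * (g x $ a $ b * Gam g x (X x) (Z x) $ b))"
      by (simp add: gf_gg gg_sum nablaG_Gam dvf_def algebra_simps sum.distrib)
    also have "(\<Sum>a\<in>UNIV. \<Sum>b\<in>UNIV. Y x $ a * (g x $ a $ b * Gam g x (X x) (Z x) $ b))
       = (\<Sum>a\<in>UNIV. Y x $ a * (\<Sum>b\<in>UNIV. g x $ a $ b * Gam g x (X x) (Z x) $ b))"
      by (simp add: sum_distrib_left)
    finally show ?thesis by (simp add: GamL2[OF x])
  qed
  have key: "(\<Sum>a\<in>UNIV. \<Sum>b\<in>UNIV. Y x $ a * (\<Sum>i\<in>UNIV. X x $ i * pd i (\<lambda>y. g y $ a $ b) x) * Z x $ b) =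
    (\<Sum>b\<in>UNIV. Z x $ b * (\<Sum>i\<in>UNIV. \<Sum>j\<in>UNIV. X x $ i * Y x $ j * Cl g x b i j)) +
    (\<Sum>a\<in>UNIV. Y x $ a * (\<Sum>i\<in>UNIV. \<Sum>j\<in>UNIV. X x $ i * Z x $ j * Cl g x a i j))"
  proof (rule sum3_key)
    fix a b i
    show "Cl g x b i a + Cl g x a i b = pd i (\<lambda>y. g y $ a $ b) x"
      unfolding Cl_def using pdg_sym[OF x, of i b a] by (simp add: field_simps)
  qed
  have "dfun X (gf g Y Z) x = (\<Sum>a\<in>UNIV. \<Sum>b\<in>UNIV. ?dY a * g x $ a $ b * Z x $ b)
     + (\<Sum>a\<in>UNIV. \<Sum>b\<in>UNIV. Y x $ a * ?dG a b * Z x $ b)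
     + (\<Sum>a\<in>UNIV. \<Sum>b\<in>UNIV. Y x $ a * g x $ a $ b * ?dZ b)"
    unfolding e1 by (simp add: sum.distrib)
  also have "(\<Sum>a\<in>UNIV. \<Sum>b\<in>UNIV. Y x $ a * ?dG a b * Z x $ b) =
    (\<Sum>a\<in>UNIV. \<Sum>b\<in>UNIV. Y x $ a * (\<Sum>i\<in>UNIV. X x $ i * pd i (\<lambda>y. g y $ a $ b) x) * Z x $ b)"
    by (simp only: dG)
  finally show ?thesis unfolding e2 e3 key by simp
qed

end

context LS begin

definition om :: "real^'n \<Rightarrow> real" where
  "om = (SOME \<omega>. \<forall>X Y. smooth_vf U X \<longrightarrow> smooth_vf U Y \<longrightarrow> (\<forall>x\<in>U.
        dfun X (pif g P Y) x - pif g P (nablaG g X Y) x - pif g P X x * pif g P Y x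
          = \<omega> x * gf g X Y x))"

lemma conc_om: "smooth_vf U X \<Longrightarrow> smooth_vf U Y \<Longrightarrow> x \<in> U \<Longrightarrow>
   dfun X (pif g P Y) x - pif g P (nablaG g X Y) x - pif g P X x * pif g P Y x = om x * gf g X Y x"
proof -
  have "\<exists>\<omega>. \<forall>X Y. smooth_vf U X \<longrightarrow> smooth_vf U Y \<longrightarrow> (\<forall>x\<in>U.
        dfun X (pif g P Y) x - pif g P (nablaG g X Y) x - pif g P X x * pif g P Y x
          = \<omega> x * gf g X Y x)" using conc unfolding concircular_def by blast
  from someI_ex[OF this] show "smooth_vf U X \<Longrightarrow> smooth_vf U Y \<Longrightarrow> x \<in> U \<Longrightarrow> ?thesis"
    unfolding om_def by blast
qed

lemma pif_gf: "pif g P W = gf g W P" by (simp add: fun_eq_iff pif_def)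

lemma gg_symx: "x \<in> U \<Longrightarrow> gg (g x) v w = gg (g x) w v"
  by (rule gg_sym) (rule gsym)

lemma DVP: "x \<in> U \<Longrightarrow> DV x P" using smooth_DV[OF sP opn] .
lemma DVc: "DV x (coord i)" unfolding DV_def coord_def by simp

lemma pif_coord: "pif g P (coord i) x = (g x *v P x) $ i"
  by (simp add: pif_gg coord_def gg_axis1)

lemma gf_coord: "gf g (coord j) W x = (g x *v W x) $ j"
  by (simp add: gf_gg coord_def gg_axis1)

lemma NPi: assumes x: "x \<in> U"
  shows "nablaG g (coord i) P x = pif g P (coord i) x *\<^sub>R P x + om x *\<^sub>R axis i 1"
proof -
  have "(g x *v nablaG g (coord i) P x) $ j = (g x *v (pif g P (coord i) x *\<^sub>R P x + om x *\<^sub>R axis i 1)) $ j" for j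
  proof -
    have c: "dfun (coord i) (pif g P (coord j)) x - pif g P (nablaG g (coord i) (coord j)) x
       - pif g P (coord i) x * pif g P (coord j) x = om x * gf g (coord i) (coord j) x"
      by (rule conc_om[OF smooth_coord smooth_coord x])
    have m: "dfun (coord i) (gf g (coord j) P) x = gf g (nablaG g (coord i) (coord j)) P x + gf g (coord j) (nablaG g (coord i) P) x"
      by (rule N_metric[OF x DVc DVP[OF x]])
    have "gf g (coord j) (nablaG g (coord i) P) x = pif g P (coord i) x * pif g P (coord j) x + om x * gf g (coord i) (coord j) x"
      using c m by (simp add: pif_gf)
    moreover have "gf g (coord i) (coord j) x = (g x *v axis i 1) $ j"
      using gg_symx[OF x, of "axis i 1" "axis j 1"] by (simp add: gf_gg coord_def gg_axis1)
    ultimately have "(g x *v nablaG g (coord i) P x) $ j = pif g P (coord i) x * (g x *v P x) $ j + om x * (g x *v axis i 1) $ j"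
      by (simp only: gf_coord pif_coord)
    then show ?thesis
      by (simp add: matrix_vector_mult_scaleR matrix_vector_right_distrib)
  qed
  then have "g x *v nablaG g (coord i) P x = g x *v (pif g P (coord i) x *\<^sub>R P x + om x *\<^sub>R axis i 1)"
    by (simp add: vec_eq_iff)
  then show ?thesis using inj_matrix_vector_mult[OF ginv_ok[OF x]] by (simp add: inj_eq)
qed

lemma om1: assumes x: "x \<in> U" shows "om x = 1"
proof -
  have "(om x - 1) * pif g P (coord i) x = 0" for i
  proof -
    have m: "dfun (coord i) (gf g P P) x = gf g (nablaG g (coord i) P) P x + gf g P (nablaG g (coord i) P) x"
      by (rule N_metric[OF x DVP[OF x] DVP[OF x]])
    have "dfun (coord i) (gf g P P) x = dfun (coord i) (\<lambda>y. -1) x"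
      by (rule dfun_local[OF opn x]) (simp add: unitP)
    then have z: "dfun (coord i) (gf g P P) x = 0" by (simp add: dfun_const)
    have pp: "gg (g x) (P x) (P x) = -1" using unitP x by (simp add: gf_gg)
    have "gf g P (nablaG g (coord i) P) x = gf g (nablaG g (coord i) P) P x"
      unfolding gf_gg by (rule gg_symx[OF x])
    then have "0 = 2 * gf g (nablaG g (coord i) P) P x" using m z by simp
    then have "0 = 2 * gg (g x) (pif g P (coord i) x *\<^sub>R P x + om x *\<^sub>R axis i 1) (P x)"
      by (simp only: gf_gg NPi[OF x])
    also have "\<dots> = 2 * (pif g P (coord i) x * (-1) + om x * pif g P (coord i) x)"
      by (simp add: pp pif_gg coord_def)
    finally show ?thesis by (simp add: algebra_simps)
  qed
  moreover have "\<exists>i. pif g P (coord i) x \<noteq> 0"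
  proof (rule ccontr)
    assume "\<not> (\<exists>i. pif g P (coord i) x \<noteq> 0)"
    then have "\<And>i. (g x *v P x) $ i = 0" by (simp add: pif_gg coord_def gg_axis1)
    then have "g x *v P x = 0" by (simp add: vec_eq_iff)
    then have "gf g P P x = 0" by (simp add: gf_def)
    then show False using unitP x by simp
  qed
  ultimately show ?thesis by auto
qed

lemma NP: assumes x: "x \<in> U" shows "nablaG g W P x = W x + pif g P W x *\<^sub>R P x"
proof -
  have "nablaG g W P x = (\<Sum>i\<in>UNIV. W x $ i *\<^sub>R (pif g P (coord i) x *\<^sub>R P x + axis i 1))"
    by (subst N_first) (simp add: NPi[OF x] om1[OF x])
  also have "\<dots> = (\<Sum>i\<in>UNIV. (W x $ i * pif g P (coord i) x)) *\<^sub>R P x + (\<Sum>i\<in>UNIV. W x $ i *\<^sub>R axis i 1)"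
    by (simp add: scaleR_add_right sum.distrib scaleR_sum_left)
  also have "(\<Sum>i\<in>UNIV. W x $ i *\<^sub>R axis i 1) = W x"
    using basis_expansion[of "W x"] by (simp add: scalar_mult_eq_scaleR)
  also have "(\<Sum>i\<in>UNIV. (W x $ i * pif g P (coord i) x)) = pif g P W x"
    by (simp only: pif_coord) (simp add: pif_gg gg_def inner_vec_def)
  finally show ?thesis by simp
qed

lemma cc1: "smooth_vf U X \<Longrightarrow> smooth_vf U Y \<Longrightarrow> x \<in> U \<Longrightarrow>
   dfun X (pif g P Y) x = pif g P (nablaG g X Y) x + pif g P X x * pif g P Y x + gf g X Y x"
  using conc_om[of X Y x] om1[of x] by simp

end

context LS begin

lemma dpi: "smooth_vf U B \<Longrightarrow> x \<in> U \<Longrightarrow> pif g P B differentiable (at x)"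
  unfolding pif_gf by (rule d_gf) (auto intro: smooth_DV[OF _ opn] DVP)

lemma dgf: "smooth_vf U B \<Longrightarrow> smooth_vf U C \<Longrightarrow> x \<in> U \<Longrightarrow> gf g B C differentiable (at x)"
  by (rule d_gf) (auto intro: smooth_DV[OF _ opn])

lemma sDV: "smooth_vf U B \<Longrightarrow> x \<in> U \<Longrightarrow> DV x B" by (rule smooth_DV[OF _ opn])

lemma NNP: assumes A: "smooth_vf U A" and B: "smooth_vf U B" and x: "x \<in> U"
  shows "nablaG g A (nablaG g B P) x = nablaG g A B x
     + (pif g P (nablaG g A B) x + pif g P A x * pif g P B x + gf g A B x) *\<^sub>R P x
     + pif g P B x *\<^sub>R (A x + pif g P A x *\<^sub>R P x)"
proof -
  have "nablaG g A (nablaG g B P) x = nablaG g A (\<lambda>y. B y + pif g P B y *\<^sub>R P y) x"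
    by (rule N_local[OF opn x]) (simp add: NP)
  also have "\<dots> = nablaG g A B x + nablaG g A (\<lambda>y. pif g P B y *\<^sub>R P y) x"
    by (rule N_add) (auto intro!: sDV[OF B x] DV_scale dpi[OF B x] DVP[OF x])
  also have "nablaG g A (\<lambda>y. pif g P B y *\<^sub>R P y) x = dfun A (pif g P B) x *\<^sub>R P x + pif g P B x *\<^sub>R nablaG g A P x"
    by (rule N_scale[OF dpi[OF B x] DVP[OF x]])
  finally show ?thesis by (simp add: cc1[OF A B x] NP[OF x] add.assoc)
qed

lemma RGP: assumes A: "smooth_vf U A" and B: "smooth_vf U B" and x: "x \<in> U"
  shows "curv (nablaG g) A B P x = pif g P B x *\<^sub>R A x - pif g P A x *\<^sub>R B x"
proof -
  have s: "gf g B A x = gf g A B x" unfolding gf_gg by (rule gg_symx[OF x])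
  have l: "lie A B x = nablaG g A B x - nablaG g B A x" using N_tf[OF x] by simp
  show ?thesis
    unfolding curv_def NNP[OF A B x] NNP[OF B A x] NP[OF x, of "lie A B"] l s
    by (simp add: pif_gg l algebra_simps)
qed

end

context LS begin

lemma N1N: assumes A: "smooth_vf U A" and B: "smooth_vf U B" and C: "smooth_vf U C" and x: "x \<in> U"
  shows "nabla1 g P A (nabla1 g P B C) x = nablaG g A (nablaG g B C) x
     + (pif g P (nablaG g A C) x + pif g P A x * pif g P C x + gf g A C x) *\<^sub>R B x
     + pif g P C x *\<^sub>R nablaG g A B x
     - (gf g (nablaG g A B) C x + gf g B (nablaG g A C) x) *\<^sub>R P x
     - gf g B C x *\<^sub>R (A x + pif g P A x *\<^sub>R P x)
     + pif g P (nabla1 g P B C) x *\<^sub>R A x - gf g A (nabla1 g P B C) x *\<^sub>R P x"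
proof -
  have e: "nabla1 g P B C = (\<lambda>y. (nablaG g B C y + pif g P C y *\<^sub>R B y) - gf g B C y *\<^sub>R P y)"
    by (simp add: fun_eq_iff nabla1_def)
  have d1: "DV x (\<lambda>y. nablaG g B C y + pif g P C y *\<^sub>R B y)"
    by (intro DV_add DV_N[OF x B C] DV_scale dpi[OF C x] sDV[OF B x])
  have d2: "DV x (\<lambda>y. gf g B C y *\<^sub>R P y)"
    by (intro DV_scale dgf[OF B C x] DVP[OF x])
  have "nablaG g A (nabla1 g P B C) x = nablaG g A (\<lambda>y. nablaG g B C y + pif g P C y *\<^sub>R B y) x
      - nablaG g A (\<lambda>y. gf g B C y *\<^sub>R P y) x"
    unfolding e by (rule N_diff[OF d1 d2])
  also have "nablaG g A (\<lambda>y. nablaG g B C y + pif g P C y *\<^sub>R B y) x =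
     nablaG g A (nablaG g B C) x + nablaG g A (\<lambda>y. pif g P C y *\<^sub>R B y) x"
    by (rule N_add) (intro DV_N[OF x B C], intro DV_scale dpi[OF C x] sDV[OF B x])
  also have "nablaG g A (\<lambda>y. pif g P C y *\<^sub>R B y) x = dfun A (pif g P C) x *\<^sub>R B x + pif g P C x *\<^sub>R nablaG g A B x"
    by (rule N_scale[OF dpi[OF C x] sDV[OF B x]])
  also have "nablaG g A (\<lambda>y. gf g B C y *\<^sub>R P y) x = dfun A (gf g B C) x *\<^sub>R P x + gf g B C x *\<^sub>R nablaG g A P x"
    by (rule N_scale[OF dgf[OF B C x] DVP[OF x]])
  finally have "nablaG g A (nabla1 g P B C) x = nablaG g A (nablaG g B C) x
     + (pif g P (nablaG g A C) x + pif g P A x * pif g P C x + gf g A C x) *\<^sub>R B x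
     + pif g P C x *\<^sub>R nablaG g A B x
     - (gf g (nablaG g A B) C x + gf g B (nablaG g A C) x) *\<^sub>R P x
     - gf g B C x *\<^sub>R (A x + pif g P A x *\<^sub>R P x)"
    by (simp add: cc1[OF A C x] N_metric[OF x sDV[OF B x] sDV[OF C x]] NP[OF x] algebra_simps)
  then show ?thesis by (simp add: nabla1_def[of g P A "nabla1 g P B C"])
qed

lemma R1f: assumes A: "smooth_vf U A" and B: "smooth_vf U B" and C: "smooth_vf U C" and x: "x \<in> U"
  shows "R1 g P A B C x = curv (nablaG g) A B C x + gf g A C x *\<^sub>R B x - gf g B C x *\<^sub>R A x"
proof -
  have s: "gg (g x) (B x) (A x) = gg (g x) (A x) (B x)" by (rule gg_symx[OF x])
  have pp: "gg (g x) (P x) (P x) = -1" using unitP x by (simp add: gf_gg)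
  have l: "lie A B x = nablaG g A B x - nablaG g B A x" using N_tf[OF x] by simp
  show ?thesis
    unfolding R1_def curv_def N1N[OF A B C x] N1N[OF B A C x]
    by (simp add: nabla1_def[of g P "lie A B"] nabla1_def[of g P B C] nabla1_def[of g P A C]
        gf_gg pif_gg l s pp algebra_simps)
qed

end

context LS begin

lemma NT0: assumes A: "smooth_vf U A" and B: "smooth_vf U B" and C: "smooth_vf U C" and x: "x \<in> U"
  shows "nablaT1 g P A B C x = 0"
proof -
  have e: "tors1 g P B C = (\<lambda>y. pif g P C y *\<^sub>R B y - pif g P B y *\<^sub>R C y)"
    by (simp add: fun_eq_iff tors1_def)
  have "nablaG g A (tors1 g P B C) x = nablaG g A (\<lambda>y. pif g P C y *\<^sub>R B y) x - nablaG g A (\<lambda>y. pif g P B y *\<^sub>R C y) x"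
    unfolding e by (rule N_diff) (intro DV_scale dpi sDV A B C x)+
  also have "\<dots> = (dfun A (pif g P C) x *\<^sub>R B x + pif g P C x *\<^sub>R nablaG g A B x)
     - (dfun A (pif g P B) x *\<^sub>R C x + pif g P B x *\<^sub>R nablaG g A C x)"
    by (simp add: N_scale[OF dpi[OF C x] sDV[OF B x]] N_scale[OF dpi[OF B x] sDV[OF C x]])
  finally have n: "nablaG g A (tors1 g P B C) x = ((pif g P (nablaG g A C) x + pif g P A x * pif g P C x + gf g A C x) *\<^sub>R B x + pif g P C x *\<^sub>R nablaG g A B x)
     - ((pif g P (nablaG g A B) x + pif g P A x * pif g P B x + gf g A B x) *\<^sub>R C x + pif g P B x *\<^sub>R nablaG g A C x)"
    by (simp add: cc1[OF A C x] cc1[OF A B x])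
  have s1: "gg (g x) (P x) (A x) = gg (g x) (A x) (P x)" by (rule gg_symx[OF x])
  have pp: "gg (g x) (P x) (P x) = -1" using unitP x by (simp add: gf_gg)
  show ?thesis
    unfolding nablaT1_def nabla1_def[of g P A "tors1 g P B C"] n
    by (simp add: nabla1_def tors1_def gf_gg pif_gg s1 pp algebra_simps)
qed

lemma R5f: assumes A: "smooth_vf U A" and B: "smooth_vf U B" and C: "smooth_vf U C" and x: "x \<in> U"
  shows "R5 g P A B C x = curv (nablaG g) A B C x + gf g A C x *\<^sub>R B x - gf g B C x *\<^sub>R A x
     + (1/2 * pif g P A x * pif g P B x) *\<^sub>R C x - (1/2 * pif g P B x * pif g P C x) *\<^sub>R A x"
  unfolding R5_def Let_def R1f[OF A B C x] NT0[OF A B C x] NT0[OF B A C x]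
  by (simp add: tors1_def pif_gg algebra_simps)

lemma coord_app: "coord i x = axis i 1" by (simp add: coord_def)

lemma sum_axis_diag: "(\<Sum>i\<in>UNIV. (axis i (1::real) :: real^'n) $ i) = real CARD('n)"
  by (simp add: axis_def)

lemma Ric5f: assumes B: "smooth_vf U B" and C: "smooth_vf U C" and x: "x \<in> U"
  shows "Ric5 g P B C x = RicG g B C x - (real CARD('n) - 1) * gf g B C x
     - (real CARD('n) - 1) / 2 * (pif g P B x * pif g P C x)"
proof -
  have "Ric5 g P B C x = (\<Sum>i\<in>UNIV. curv (nablaG g) (coord i) B C x $ i)
     + (\<Sum>i\<in>UNIV. gf g (coord i) C x * B x $ i)
     - gf g B C x * (\<Sum>i\<in>UNIV. (axis i 1 :: real^'n) $ i)
     + 1/2 * pif g P B x * (\<Sum>i\<in>UNIV. pif g P (coord i) x * C x $ i)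
     - 1/2 * pif g P B x * pif g P C x * (\<Sum>i\<in>UNIV. (axis i 1 :: real^'n) $ i)"
    unfolding Ric5_def ricci_def
    by (simp add: R5f[OF smooth_coord B C x] sum.distrib sum_subtractf sum_distrib_left
        coord_app algebra_simps)
  also have "(\<Sum>i\<in>UNIV. gf g (coord i) C x * B x $ i) = gf g B C x"
    by (simp only: gf_coord, simp add: gf_gg gg_def inner_vec_def mult.commute)
  also have "(\<Sum>i\<in>UNIV. pif g P (coord i) x * C x $ i) = pif g P C x"
    by (simp only: pif_coord, simp add: pif_gg gg_def inner_vec_def mult.commute)
  finally show ?thesis
    by (simp add: sum_axis_diag RicG_def ricci_def algebra_simps add_divide_distrib diff_divide_distrib)
qed

lemma RicGP: assumes B: "smooth_vf U B" and x: "x \<in> U"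
  shows "RicG g B P x = (real CARD('n) - 1) * pif g P B x"
proof -
  have "RicG g B P x = (\<Sum>i\<in>UNIV. pif g P B x * axis i 1 $ i - pif g P (coord i) x * B x $ i)"
    unfolding RicG_def ricci_def by (simp add: RGP[OF smooth_coord B x] coord_app)
  also have "\<dots> = pif g P B x * real CARD('n) - pif g P B x"
    by (simp add: sum_subtractf sum_distrib_left[symmetric] sum_axis_diag, simp only: pif_coord,
        simp add: pif_gg gg_def inner_vec_def mult.commute)
  finally show ?thesis by (simp add: algebra_simps)
qed

end

context LS begin

lemma ex_pi: assumes x: "x \<in> U" shows "\<exists>i. pif g P (coord i) x \<noteq> 0"
proof (rule ccontr)
  assume "\<not> (\<exists>i. pif g P (coord i) x \<noteq> 0)"
  then have "\<And>i. (g x *v P x) $ i = 0" by (simp add: pif_coord)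
  then have "g x *v P x = 0" by (simp add: vec_eq_iff)
  then have "gf g P P x = 0" by (simp add: gf_def)
  then show False using unitP x by simp
qed

lemma scal_form:
  assumes x: "x \<in> U"
    and R: "\<And>j k. R (coord j) (coord k) x = \<alpha> * gf g (coord j) (coord k) x + \<beta> * (pif g P (coord j) x * pif g P (coord k) x)"
  shows "scal g R x = \<alpha> * real CARD('n) - \<beta>"
proof -
  have T1: "(\<Sum>j\<in>UNIV. \<Sum>k\<in>UNIV. ginv g x $ j $ k * gf g (coord j) (coord k) x) = real CARD('n)"
  proof -
    have "(\<Sum>j\<in>UNIV. \<Sum>k\<in>UNIV. ginv g x $ j $ k * gf g (coord j) (coord k) x)
       = (\<Sum>j\<in>UNIV. (ginv g x ** g x) $ j $ j)"
      by (simp only: gf_coord, simp add: coord_app matrix_vector_mult_def axis_def sum_delta_mult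
          matrix_matrix_mult_def gsym[OF x])
    also have "\<dots> = real CARD('n)" by (simp add: gginv[OF x] mat_def)
    finally show ?thesis .
  qed
  have T2: "(\<Sum>j\<in>UNIV. \<Sum>k\<in>UNIV. ginv g x $ j $ k * (pif g P (coord j) x * pif g P (coord k) x)) = -1"
  proof -
    have "(\<Sum>j\<in>UNIV. \<Sum>k\<in>UNIV. ginv g x $ j $ k * (pif g P (coord j) x * pif g P (coord k) x))
      = (\<Sum>j\<in>UNIV. (g x *v P x) $ j * (ginv g x *v (g x *v P x)) $ j)"
      by (simp only: pif_coord, simp add: matrix_vector_mult_def sum_distrib_left mult_ac)
    also have "ginv g x *v (g x *v P x) = P x"
      by (simp add: matrix_vector_mul_assoc gginv[OF x])
    also have "(\<Sum>j\<in>UNIV. (g x *v P x) $ j * P x $ j) = gf g P P x"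
      by (simp add: gf_def inner_vec_def mult.commute)
    finally show ?thesis using unitP x by simp
  qed
  have "scal g R x = \<alpha> * (\<Sum>j\<in>UNIV. \<Sum>k\<in>UNIV. ginv g x $ j $ k * gf g (coord j) (coord k) x)
     + \<beta> * (\<Sum>j\<in>UNIV. \<Sum>k\<in>UNIV. ginv g x $ j $ k * (pif g P (coord j) x * pif g P (coord k) x))"
    unfolding scal_def R by (simp add: sum_distrib_left sum.distrib algebra_simps)
  then show ?thesis using T1 T2 by simp
qed


end

abbreviation (in LS) FF where "FF \<equiv> (\<forall>Y Z. smooth_vf U Y \<longrightarrow> smooth_vf U Z \<longrightarrow> (\<forall>x\<in>U.
               RicG g Y Z x = (real CARD('n) - 1) / 2 * (3 * gf g Y Z x + pif g P Y x * pif g P Z x)))"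

lemma (in LS) ppP: "x \<in> U \<Longrightarrow> pif g P P x = -1" using unitP by (simp add: pif_gf)
lemma (in LS) gfP: "gf g Y P x = pif g P Y x" by (simp add: pif_gf)

lemma (in LS) E2F: assumes E: "einstein5 U g P" and n3: "CARD('n) \<ge> 3" shows FF
proof (intro allI impI ballI)
  define n where "n = real CARD('n)"
  have n0: "n \<noteq> 0" using n3 unfolding n_def by simp
  fix Y Z x assume Y: "smooth_vf U Y" and Z: "smooth_vf U Z" and x: "x \<in> U"
  let ?r = "scal g (Ric5 g P) x / n"
  have r: "?r = (n - 1) / 2"
  proof -
    obtain i where i: "pif g P (coord i) x \<noteq> 0" using ex_pi[OF x] by blast
    have "Ric5 g P (coord i) P x = ?r * gf g (coord i) P x"
      using E smooth_coord sP x unfolding einstein5_def n_def by blast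
    moreover have "Ric5 g P (coord i) P x = (n - 1) / 2 * pif g P (coord i) x"
      unfolding Ric5f[OF smooth_coord sP x] RicGP[OF smooth_coord x] gfP ppP[OF x] n_def
      by (simp add: field_simps)
    ultimately have "?r * pif g P (coord i) x = (n - 1) / 2 * pif g P (coord i) x"
      by (simp add: gfP)
    then show ?thesis using i mult_right_cancel by blast
  qed
  have "Ric5 g P Y Z x = ?r * gf g Y Z x"
    using E Y Z x unfolding einstein5_def n_def by blast
  then have "RicG g Y Z x - (n - 1) * gf g Y Z x - (n - 1) / 2 * (pif g P Y x * pif g P Z x) = (n - 1) / 2 * gf g Y Z x"
    using Ric5f[OF Y Z x] r unfolding n_def by simp
  then show "RicG g Y Z x = (real CARD('n) - 1) / 2 * (3 * gf g Y Z x + pif g P Y x * pif g P Z x)"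
    unfolding n_def by (simp add: field_simps)
qed

lemma (in LS) F2E: assumes F: FF and n3: "CARD('n) \<ge> 3" shows "einstein5 U g P"
  unfolding einstein5_def
proof (intro allI impI ballI)
  define n where "n = real CARD('n)"
  have n0: "n \<noteq> 0" using n3 unfolding n_def by simp
  fix Y Z x assume Y: "smooth_vf U Y" and Z: "smooth_vf U Z" and x: "x \<in> U"
  have R5: "\<And>Y Z. smooth_vf U Y \<Longrightarrow> smooth_vf U Z \<Longrightarrow> Ric5 g P Y Z x = (n - 1) / 2 * gf g Y Z x"
  proof -
    fix Y Z assume Y: "smooth_vf U Y" and Z: "smooth_vf U Z"
    show "Ric5 g P Y Z x = (n - 1) / 2 * gf g Y Z x"
      using Ric5f[OF Y Z x] F Y Z x unfolding n_def by (simp add: field_simps)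
  qed
  have "scal g (Ric5 g P) x = (n - 1) / 2 * n - 0"
    by (rule scal_form[OF x, unfolded n_def[symmetric]]) (simp add: R5 smooth_coord)
  then have sc: "scal g (Ric5 g P) x / n = (n - 1) / 2" using n0 by simp
  have a: "scal g (Ric5 g P) x / n * gf g Y Z x = (n - 1) / 2 * gf g Y Z x" by (simp only: sc)
  show "Ric5 g P Y Z x = scal g (Ric5 g P) x / real CARD('n) * gf g Y Z x"
    unfolding n_def[symmetric] using R5[OF Y Z] a by metis
qed

lemma (in LS) SC: assumes E: "einstein5 U g P" and n3: "CARD('n) \<ge> 3"
  shows "\<forall>x\<in>U. 2 * scal g (RicG g) x = (real CARD('n) - 1) * (3 * real CARD('n) - 1)"
proof
  define n where "n = real CARD('n)"
  fix x assume x: "x \<in> U"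
  have "scal g (RicG g) x = 3 * (n - 1) / 2 * n - (n - 1) / 2"
  proof (rule scal_form[OF x, unfolded n_def[symmetric]])
    fix j k
    have "RicG g (coord j) (coord k) x = (n - 1) / 2 * (3 * gf g (coord j) (coord k) x
        + pif g P (coord j) x * pif g P (coord k) x)"
      using E2F[OF E n3, rule_format, OF smooth_coord smooth_coord x] unfolding n_def .
    then show "RicG g (coord j) (coord k) x = 3 * (n - 1) / 2 * gf g (coord j) (coord k) x
        + (n - 1) / 2 * (pif g P (coord j) x * pif g P (coord k) x)"
      by (simp add: algebra_simps)
  qed
  then have "2 * scal g (RicG g) x = 2 * (3 * (n - 1) / 2 * n) - 2 * ((n - 1) / 2)" by simp
  also have "\<dots> = 3 * (n - 1) * n - (n - 1)" by (simp add: field_simps)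
  also have "\<dots> = (n - 1) * (3 * n - 1)" by (simp add: algebra_simps)
  finally show "2 * scal g (RicG g) x = (real CARD('n) - 1) * (3 * real CARD('n) - 1)"
    unfolding n_def .
qed

lemma (in LS) PF: assumes F: FF shows "perfect_fluid U g P"
  unfolding perfect_fluid_def
  by (rule exI[of _ "\<lambda>x. 3 * (real CARD('n) - 1) / 2"], rule exI[of _ "\<lambda>x. (real CARD('n) - 1) / 2"])
     (use F in \<open>simp add: algebra_simps\<close>)

theorem mainTheorem14:
  fixes U :: "(real^'n::finite) set" and g :: "'n metric" and P :: "'n vf"
  assumes "CARD('n) \<ge> 3"
    and "open U"
    and "smooth_metric U g"
    and "\<forall>x\<in>U. lorentzian_matrix (g x)"
    and "smooth_vf U P"
    and "concircular U g P"
    and "\<forall>x\<in>U. gf g P P x = -1"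
  shows "(einstein5 U g P \<longleftrightarrow>
           (perfect_fluid U g P \<and>
            (\<forall>Y Z. smooth_vf U Y \<longrightarrow> smooth_vf U Z \<longrightarrow> (\<forall>x\<in>U.
               RicG g Y Z x = (real CARD('n) - 1) / 2 *
                 (3 * gf g Y Z x + pif g P Y x * pif g P Z x)))))
       \<and> (einstein5 U g P \<longrightarrow>
           (\<exists>c. \<forall>x\<in>U. scal g (RicG g) x = c) \<and>
           (\<forall>x\<in>U. 2 * scal g (RicG g) x = (real CARD('n) - 1) * (3 * real CARD('n) - 1)))"
proof -
  interpret LS U g P using assms(2-7) by unfold_locales
  have 1: "einstein5 U g P \<longleftrightarrow> perfect_fluid U g P \<and> FF"
  proof
    assume E: "einstein5 U g P"
    have F: FF by (rule E2F[OF E assms(1)])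
    show "perfect_fluid U g P \<and> FF" using PF[OF F] F by (rule conjI)
  next
    assume "perfect_fluid U g P \<and> FF"
    then have F: FF by (rule conjunct2)
    show "einstein5 U g P" by (rule F2E[OF F assms(1)])
  qed
  have 2: "einstein5 U g P \<longrightarrow> (\<exists>c. \<forall>x\<in>U. scal g (RicG g) x = c) \<and>
           (\<forall>x\<in>U. 2 * scal g (RicG g) x = (real CARD('n) - 1) * (3 * real CARD('n) - 1))"
  proof
    assume E: "einstein5 U g P"
    have S: "\<forall>x\<in>U. 2 * scal g (RicG g) x = (real CARD('n) - 1) * (3 * real CARD('n) - 1)"
      by (rule SC[OF E assms(1)])
    have "\<forall>x\<in>U. scal g (RicG g) x = (real CARD('n) - 1) * (3 * real CARD('n) - 1) / 2"
      using S by auto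
    then show "(\<exists>c. \<forall>x\<in>U. scal g (RicG g) x = c) \<and>
           (\<forall>x\<in>U. 2 * scal g (RicG g) x = (real CARD('n) - 1) * (3 * real CARD('n) - 1))"
      using S by blast
  qed
  show ?thesis using 1 2 by (rule conjI)
qed

end
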